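(* Under the Physarum dynamics, let $e=\{u,v\}$ be a horizontal edge, i.e. $|p_u(t)-p_v(t)|\to0$ as $t\to\infty$. Then $D_e$ decays with rate $-1$ and $|Q_e|$ decays with rate at least $-1$.
   Context: Let $G=(N,E)$ be a finite connected undirected graph with two distinct vertices $s_0$ (source) and $s_1$ (sink). Each edge $e$ has a fixed length $L_e>0$. Each edge has a time-dependent diameter $D_e(t)$ with $D_e(0)>0$, and resistance $R_e=L_e/D_e$. At each time $t$, the vertex potentials $p_v$ (normalized by $p_{s_1}=0$) are the solution of $\sum_{u\in\delta(v)}(p_v-p_u)/R_{uv}=b_v$ for all $v$, where $\delta(v)$ is the set of neighbours of $v$, $b_{s_0}=1$, $b_{s_1}=-1$, $b_v=0$ otherwise; for an edge $e=\{u,v\}$ with an arbitrarily fixed orientation $(u,v)$ the current is $Q_e=(p_u-p_v)/R_e=D_e(p_u-p_v)/L_e$. The diameters evolve by $\dot D_e(t)=|Q_e(t)|-D_e(t)$ for all $e\in E$ (the "Physarum dynamics"). Decay rates: let $r\le 0$. A nonnegative quantity $X(t)$ decays with rate at least $r$ if for every $\varepsilon>0$ there is $A>0$ with $X(t)\le Ae^{(r+\varepsilon)t}$ for all $t\ge0$; it decays with rate at most $r$ if for every $\varepsilon>0$ there is $a>0$ with $X(t)\ge ae^{(r-\varepsilon)t}$ for all $t\ge 0$; it decays with rate $r$ if both hold. *)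

theory Defs
  imports "HOL-Analysis.Analysis"
begin

definition graph_ok :: "'v set \<Rightarrow> 'v set set \<Rightarrow> bool" where
  "graph_ok N E \<longleftrightarrow> finite N \<and> E \<subseteq> {{u, v} | u v. u \<in> N \<and> v \<in> N \<and> u \<noteq> v}
     \<and> (\<forall>u\<in>N. \<forall>v\<in>N. (u, v) \<in> {(x, y). {x, y} \<in> E}\<^sup>*)"

definition neighbours :: "'v set \<Rightarrow> 'v set set \<Rightarrow> 'v \<Rightarrow> 'v set" where
  "neighbours N E v = {u \<in> N. {u, v} \<in> E}"

definition supply_vec :: "'v \<Rightarrow> 'v \<Rightarrow> 'v \<Rightarrow> real" where
  "supply_vec s0 s1 v = (if v = s0 then 1 else if v = s1 then -1 else 0)"

definition resistance :: "('v set \<Rightarrow> real) \<Rightarrow> (real \<Rightarrow> 'v set \<Rightarrow> real) \<Rightarrow> real \<Rightarrow> 'v set \<Rightarrow> real" where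
  "resistance L D t e = L e / D t e"

definition current :: "('v set \<Rightarrow> real) \<Rightarrow> (real \<Rightarrow> 'v set \<Rightarrow> real) \<Rightarrow> (real \<Rightarrow> 'v \<Rightarrow> real)
    \<Rightarrow> real \<Rightarrow> 'v \<Rightarrow> 'v \<Rightarrow> real" where
  "current L D p t u v = (p t u - p t v) / resistance L D t {u, v}"

definition physarum :: "'v set \<Rightarrow> 'v set set \<Rightarrow> 'v \<Rightarrow> 'v \<Rightarrow> ('v set \<Rightarrow> real)
    \<Rightarrow> (real \<Rightarrow> 'v set \<Rightarrow> real) \<Rightarrow> (real \<Rightarrow> 'v \<Rightarrow> real) \<Rightarrow> bool" where
  "physarum N E s0 s1 L D p \<longleftrightarrow>
     graph_ok N E \<and> s0 \<in> N \<and> s1 \<in> N \<and> s0 \<noteq> s1 \<and>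
     (\<forall>e\<in>E. L e > 0) \<and> (\<forall>e\<in>E. D 0 e > 0) \<and>
     (\<forall>t\<ge>0. p t s1 = 0 \<and>
        (\<forall>v\<in>N. (\<Sum>u\<in>neighbours N E v. (p t v - p t u) / resistance L D t {u, v})
                 = supply_vec s0 s1 v)) \<and>
     (\<forall>u v. {u, v} \<in> E \<longrightarrow> (\<forall>t\<ge>0.
        ((\<lambda>\<tau>. D \<tau> {u, v}) has_real_derivative (\<bar>current L D p t u v\<bar> - D t {u, v}))
          (at t within {0..})))"

definition decays_at_least :: "(real \<Rightarrow> real) \<Rightarrow> real \<Rightarrow> bool" where
  "decays_at_least X r \<longleftrightarrow> (\<forall>\<epsilon>>0. \<exists>A>0. \<forall>t\<ge>0. X t \<le> A * exp ((r + \<epsilon>) * t))"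

definition decays_at_most :: "(real \<Rightarrow> real) \<Rightarrow> real \<Rightarrow> bool" where
  "decays_at_most X r \<longleftrightarrow> (\<forall>\<epsilon>>0. \<exists>a>0. \<forall>t\<ge>0. X t \<ge> a * exp ((r - \<epsilon>) * t))"

definition decays_with_rate :: "(real \<Rightarrow> real) \<Rightarrow> real \<Rightarrow> bool" where
  "decays_with_rate X r \<longleftrightarrow> decays_at_least X r \<and> decays_at_most X r"

end

theory Submission imports Defs begin

lemma mono_deriv:
  fixes f d :: "real \<Rightarrow> real"
  assumes ab: "a \<le> b"
    and der: "\<And>x. a \<le> x \<Longrightarrow> x \<le> b \<Longrightarrow> (f has_real_derivative d x) (at x within {a..b})"
    and nn: "\<And>x. a \<le> x \<Longrightarrow> x \<le> b \<Longrightarrow> d x \<ge> 0"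
  shows "f a \<le> f b"
proof -
  have "\<And>x. a \<le> x \<Longrightarrow> x \<le> b \<Longrightarrow> (f has_derivative (\<lambda>h. d x * h)) (at x within {a..b})"
    using der by (simp add: has_field_derivative_def)
  from mvt_very_simple[OF ab this] obtain x where "x \<in> {a..b}" "f b - f a = d x * (b - a)" by auto
  moreover have "d x * (b - a) \<ge> 0" using nn[of x] ab \<open>x \<in> {a..b}\<close> by simp
  ultimately show ?thesis by linarith
qed

lemma ode_lower:
  fixes X q :: "real \<Rightarrow> real"
  assumes der: "\<And>t. t \<ge> 0 \<Longrightarrow> (X has_real_derivative (q t - X t)) (at t within {0..})"
    and qnn: "\<And>t. t \<ge> 0 \<Longrightarrow> q t \<ge> 0" and t: "t \<ge> 0"
  shows "X 0 * exp (-t) \<le> X t"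
proof -
  have "X 0 * exp 0 \<le> X t * exp t"
  proof (rule mono_deriv[where d = "\<lambda>\<tau>. q \<tau> * exp \<tau>", OF t])
    fix x assume x: "0 \<le> x" "x \<le> t"
    have d1: "(X has_real_derivative (q x - X x)) (at x within {0..t})"
      by (rule has_field_derivative_subset[OF der]) (use x in auto)
    show "((\<lambda>\<tau>. X \<tau> * exp \<tau>) has_real_derivative q x * exp x) (at x within {0..t})"
      using d1 by (auto intro!: derivative_eq_intros simp: algebra_simps)
    show "0 \<le> q x * exp x" using qnn[of x] x by simp
  qed
  then show ?thesis by (simp add: exp_minus divide_le_eq field_simps)
qed

lemma ode_upper1:
  fixes X q :: "real \<Rightarrow> real"
  assumes der: "\<And>t. t \<ge> 0 \<Longrightarrow> (X has_real_derivative (q t - X t)) (at t within {0..})"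
    and q1: "\<And>t. t \<ge> 0 \<Longrightarrow> q t \<le> 1" and t: "t \<ge> 0" and X0: "X 0 \<ge> 0"
  shows "X t \<le> 1 + X 0"
proof -
  have "(1 - X 0) * exp 0 \<le> (1 - X t) * exp t"
  proof (rule mono_deriv[where d = "\<lambda>\<tau>. (1 - q \<tau>) * exp \<tau>", OF t])
    fix x assume x: "0 \<le> x" "x \<le> t"
    have d1: "(X has_real_derivative (q x - X x)) (at x within {0..t})"
      by (rule has_field_derivative_subset[OF der]) (use x in auto)
    show "((\<lambda>\<tau>. (1 - X \<tau>) * exp \<tau>) has_real_derivative (1 - q x) * exp x) (at x within {0..t})"
      using d1 by (auto intro!: derivative_eq_intros simp: algebra_simps)
    show "0 \<le> (1 - q x) * exp x" using q1[of x] x by simp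
  qed
  then have h: "(X t - 1) * exp t \<le> X 0 - 1" by (simp add: algebra_simps)
  have e1: "1 \<le> exp t" using t by simp
  show ?thesis
  proof (cases "X t \<le> 1")
    case True then show ?thesis using X0 by simp
  next
    case False
    then have "X t - 1 \<le> (X t - 1) * exp t" using e1 by (simp add: mult_le_cancel_left1)
    then show ?thesis using h by simp
  qed
qed

lemma ode_upper2:
  fixes X q :: "real \<Rightarrow> real"
  assumes der: "\<And>t. t \<ge> 0 \<Longrightarrow> (X has_real_derivative (q t - X t)) (at t within {0..})"
    and T: "T \<ge> 0" and qk: "\<And>t. t \<ge> T \<Longrightarrow> q t \<le> k * X t" and t: "t \<ge> T"
  shows "X t * exp ((1 - k) * t) \<le> X T * exp ((1 - k) * T)"
proof -
  have "- X T * exp ((1 - k) * T) \<le> - X t * exp ((1 - k) * t)"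
  proof (rule mono_deriv[where d = "\<lambda>\<tau>. (k * X \<tau> - q \<tau>) * exp ((1 - k) * \<tau>)", OF t])
    fix x assume x: "T \<le> x" "x \<le> t"
    have d1: "(X has_real_derivative (q x - X x)) (at x within {T..t})"
      by (rule has_field_derivative_subset[OF der]) (use x T in auto)
    show "((\<lambda>\<tau>. - X \<tau> * exp ((1 - k) * \<tau>)) has_real_derivative (k * X x - q x) * exp ((1 - k) * x)) (at x within {T..t})"
      using d1 by (auto intro!: derivative_eq_intros simp: algebra_simps)
    show "0 \<le> (k * X x - q x) * exp ((1 - k) * x)" using qk[of x] x by simp
  qed
  then show ?thesis by simp
qed

lemma cut_bound:
  fixes P :: "'v \<Rightarrow> real" and r :: "'v set \<Rightarrow> real"
  assumes finN: "finite N"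
    and rnn: "\<And>e. e \<in> E \<Longrightarrow> r e \<ge> 0"
    and kir: "\<And>x. x \<in> N \<Longrightarrow> (\<Sum>w\<in>neighbours N E x. (P x - P w) / r {w, x}) = supply_vec s0 s1 x"
    and ab: "{a,b} \<in> E" "a \<in> N" "b \<in> N" "P b < P a"
  shows "(P a - P b) / r {a, b} \<le> 1"
proof -
  define S where "S = {x\<in>N. P a \<le> P x}"
  define f where "f x w = (P x - P w) / r {w, x}" for x w
  define g where "g x w = (if {w,x} \<in> E then f x w else 0)" for x w
  have finS: "finite S" using finN by (simp add: S_def)
  have SN: "S \<subseteq> N" by (auto simp: S_def)
  have nbfin: "finite (neighbours N E x)" for x using finN by (simp add: neighbours_def)
  have aS: "a \<in> S" using ab by (simp add: S_def)
  have g_anti: "g x w = - g w x" for x w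
    by (simp add: g_def f_def insert_commute minus_divide_left)
  have Z: "(\<Sum>x\<in>S. \<Sum>w\<in>S. g x w) = 0"
  proof -
    have "(\<Sum>x\<in>S. \<Sum>w\<in>S. g x w) = (\<Sum>w\<in>S. \<Sum>x\<in>S. g x w)" by (rule sum.swap)
    also have "\<dots> = (\<Sum>w\<in>S. \<Sum>x\<in>S. - g w x)" by (intro sum.cong refl g_anti)
    also have "\<dots> = - (\<Sum>x\<in>S. \<Sum>w\<in>S. g x w)" by (simp add: sum_negf)
    finally show ?thesis by simp
  qed
  have split: "(\<Sum>w\<in>neighbours N E x. f x w) = (\<Sum>w\<in>S. g x w) + (\<Sum>w\<in>neighbours N E x - S. f x w)" for x
  proof -
    have "(\<Sum>w\<in>neighbours N E x. f x w) = (\<Sum>w\<in>neighbours N E x \<inter> S. f x w) + (\<Sum>w\<in>neighbours N E x - S. f x w)"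
      using nbfin by (rule sum.Int_Diff)
    moreover have "neighbours N E x \<inter> S = {w\<in>S. {w,x}\<in>E}" using SN by (auto simp: neighbours_def)
    moreover have "(\<Sum>w\<in>{w\<in>S. {w,x}\<in>E}. f x w) = (\<Sum>w\<in>S. g x w)"
      using finS by (simp add: sum.inter_filter g_def)
    ultimately show ?thesis by simp
  qed
  have nonneg: "f x w \<ge> 0" if "x \<in> S" "w \<in> neighbours N E x - S" for x w
  proof -
    have "{w,x} \<in> E" "P w < P x" using that by (auto simp: neighbours_def S_def)
    then show ?thesis using rnn[of "{w,x}"] by (simp add: f_def)
  qed
  have "(\<Sum>x\<in>S. supply_vec s0 s1 x) = (\<Sum>x\<in>S. \<Sum>w\<in>neighbours N E x. f x w)"
    using kir SN by (auto simp: f_def intro!: sum.cong)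
  also have "\<dots> = (\<Sum>x\<in>S. \<Sum>w\<in>S. g x w) + (\<Sum>x\<in>S. \<Sum>w\<in>neighbours N E x - S. f x w)"
    by (simp add: split sum.distrib)
  also have "\<dots> = (\<Sum>x\<in>S. \<Sum>w\<in>neighbours N E x - S. f x w)" using Z by simp
  finally have eq: "(\<Sum>x\<in>S. supply_vec s0 s1 x) = (\<Sum>x\<in>S. \<Sum>w\<in>neighbours N E x - S. f x w)" .
  have bnb: "b \<in> neighbours N E a - S" using ab by (auto simp: neighbours_def S_def insert_commute)
  have "f a b \<le> (\<Sum>w\<in>neighbours N E a - S. f a w)"
    by (rule member_le_sum[OF bnb]) (use nonneg aS nbfin in auto)
  also have "\<dots> \<le> (\<Sum>x\<in>S. \<Sum>w\<in>neighbours N E x - S. f x w)"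
    by (rule member_le_sum[OF aS]) (use nonneg finS in \<open>auto intro!: sum_nonneg\<close>)
  also have "\<dots> = (\<Sum>x\<in>S. supply_vec s0 s1 x)" using eq by simp
  also have "\<dots> \<le> (\<Sum>x\<in>S. if x = s0 then 1 else 0)"
    by (rule sum_mono) (simp add: supply_vec_def)
  also have "\<dots> \<le> 1" using finS by simp
  finally show ?thesis by (simp add: f_def insert_commute)
qed

theorem mainTheorem12:
  fixes N :: "'v set" and E :: "'v set set" and s0 s1 u v :: 'v
    and L :: "'v set \<Rightarrow> real" and D :: "real \<Rightarrow> 'v set \<Rightarrow> real" and p :: "real \<Rightarrow> 'v \<Rightarrow> real"
  assumes "physarum N E s0 s1 L D p"
    and "{u, v} \<in> E"
    and "((\<lambda>t. \<bar>p t u - p t v\<bar>) \<longlongrightarrow> 0) at_top"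
  shows "decays_with_rate (\<lambda>t. D t {u, v}) (-1)
       \<and> decays_at_least (\<lambda>t. \<bar>current L D p t u v\<bar>) (-1)"
proof -
  note ph = assms(1)[unfolded physarum_def graph_ok_def]
  have finN: "finite N" using ph by blast
  have Esub: "E \<subseteq> {{a, b} | a b. a \<in> N \<and> b \<in> N \<and> a \<noteq> b}" using ph by blast
  have Lpos: "\<And>e. e \<in> E \<Longrightarrow> L e > 0" using ph by blast
  have D0pos: "\<And>e. e \<in> E \<Longrightarrow> D 0 e > 0" using ph by blast
  have kir: "\<And>t x. t \<ge> 0 \<Longrightarrow> x \<in> N \<Longrightarrow> (\<Sum>w\<in>neighbours N E x. (p t x - p t w) / resistance L D t {w, x})
                 = supply_vec s0 s1 x" using ph by blast
  have der: "\<And>a b t. {a, b} \<in> E \<Longrightarrow> t \<ge> 0 \<Longrightarrow>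
        ((\<lambda>\<tau>. D \<tau> {a, b}) has_real_derivative (\<bar>current L D p t a b\<bar> - D t {a, b})) (at t within {0..})"
    using ph by blast
  have Dlow: "D 0 e * exp (-t) \<le> D t e" if e: "e \<in> E" and t: "t \<ge> 0" for e t
  proof -
    obtain a b where ab: "e = {a, b}" using e Esub by blast
    show ?thesis unfolding ab
      by (rule ode_lower[where q = "\<lambda>t. \<bar>current L D p t a b\<bar>", OF der[of a b]]) (use e ab t in auto)
  qed
  have Dpos: "D t e > 0" if "e \<in> E" "t \<ge> 0" for e t
    using Dlow[OF that] D0pos[OF that(1)] by (smt (verit) exp_gt_zero mult_pos_pos)
  have uN: "u \<in> N" and vN: "v \<in> N" using assms(2) Esub by (auto simp: doubleton_eq_iff)
  have Q1: "\<bar>current L D p t u v\<bar> \<le> 1" if t: "t \<ge> 0" for t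
  proof -
    have rnn: "\<And>e. e \<in> E \<Longrightarrow> resistance L D t e \<ge> 0"
      using Lpos Dpos t by (simp add: resistance_def less_imp_le)
    have kt: "\<And>x. x \<in> N \<Longrightarrow> (\<Sum>w\<in>neighbours N E x. (p t x - p t w) / resistance L D t {w, x}) = supply_vec s0 s1 x"
      using kir t by blast
    consider "p t v < p t u" | "p t u < p t v" | "p t u = p t v" by linarith
    then show ?thesis
    proof cases
      case 1
      have "(p t u - p t v) / resistance L D t {u, v} \<le> 1"
        by (rule cut_bound[OF finN rnn kt assms(2) uN vN 1])
      moreover have "(p t u - p t v) / resistance L D t {u, v} \<ge> 0"
        using 1 rnn[OF assms(2)] by simp
      ultimately show ?thesis by (simp add: current_def)
    next
      case 2
      have E': "{v, u} \<in> E" using assms(2) by (simp add: insert_commute)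
      have "(p t v - p t u) / resistance L D t {v, u} \<le> 1"
        by (rule cut_bound[OF finN rnn kt E' vN uN 2])
      moreover have "(p t v - p t u) / resistance L D t {v, u} \<ge> 0"
        using 2 rnn[OF E'] by simp
      ultimately have "\<bar>(p t v - p t u) / resistance L D t {u, v}\<bar> \<le> 1" by (simp add: insert_commute)
      moreover have "(p t u - p t v) / resistance L D t {u,v} = - ((p t v - p t u) / resistance L D t {u,v})"
        by (simp add: diff_divide_distrib)
      ultimately show ?thesis by (simp add: current_def)
    next
      case 3 then show ?thesis by (simp add: current_def)
    qed
  qed
  define X where "X t = D t {u, v}" for t
  define ll where "ll = L {u, v}"
  have lpos: "ll > 0" using Lpos assms(2) by (simp add: ll_def)
  have X0: "X 0 > 0" using D0pos assms(2) by (simp add: X_def)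
  have derX: "\<And>t. t \<ge> 0 \<Longrightarrow> (X has_real_derivative (\<bar>current L D p t u v\<bar> - X t)) (at t within {0..})"
    unfolding X_def using der[OF assms(2)] by blast
  have Xb: "X t \<le> 1 + X 0" if "t \<ge> 0" for t
    by (rule ode_upper1[OF derX]) (use Q1 that X0 in auto)
  have Qeq: "\<bar>current L D p t u v\<bar> = \<bar>p t u - p t v\<bar> * X t / ll" if "t \<ge> 0" for t
  proof -
    have "X t > 0" using Dpos assms(2) that by (simp add: X_def)
    then show ?thesis using lpos
      by (simp add: current_def resistance_def X_def ll_def abs_divide abs_mult)
  qed
  have lower: "decays_at_most X (-1)"
    unfolding decays_at_most_def
  proof (intro allI impI)
    fix \<epsilon> :: real assume "\<epsilon> > 0"
    have "\<forall>t\<ge>0. X 0 * exp ((- 1 - \<epsilon>) * t) \<le> X t"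
    proof (intro allI impI)
      fix t :: real assume t: "t \<ge> 0"
      have "(- 1 - \<epsilon>) * t \<le> - t" using t \<open>\<epsilon> > 0\<close> by (simp add: algebra_simps mult_nonneg_nonneg)
      then have "exp ((- 1 - \<epsilon>) * t) \<le> exp (-t)" by simp
      then have "X 0 * exp ((- 1 - \<epsilon>) * t) \<le> X 0 * exp (-t)" using X0 by simp
      also have "\<dots> \<le> X t" using Dlow[OF assms(2) t] by (simp add: X_def)
      finally show "X 0 * exp ((- 1 - \<epsilon>) * t) \<le> X t" .
    qed
    then show "\<exists>a>0. \<forall>t\<ge>0. a * exp ((- 1 - \<epsilon>) * t) \<le> X t" using X0 by blast
  qed
  have upper: "decays_at_least X (-1) \<and> decays_at_least (\<lambda>t. \<bar>current L D p t u v\<bar>) (-1)"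
  proof -
    have "\<exists>A>0. \<forall>t\<ge>0. X t \<le> A * exp ((-1 + \<epsilon>) * t)"
      and "\<exists>A>0. \<forall>t\<ge>0. \<bar>current L D p t u v\<bar> \<le> A * exp ((-1 + \<epsilon>) * t)" if ep: "\<epsilon> > 0" for \<epsilon>
    proof -
      have "\<forall>\<^sub>F t in at_top. \<bar>p t u - p t v\<bar> < \<epsilon> * ll"
        using order_tendstoD(2)[OF assms(3)] ep lpos by simp
      then obtain T0 where T0: "\<And>t. t \<ge> T0 \<Longrightarrow> \<bar>p t u - p t v\<bar> < \<epsilon> * ll"
        by (auto simp: eventually_at_top_linorder)
      define T where "T = max T0 0"
      have T: "T \<ge> 0" by (simp add: T_def)
      have Qe: "\<bar>current L D p t u v\<bar> \<le> \<epsilon> * X t" if "t \<ge> T" for t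
      proof -
        have t0: "t \<ge> 0" "t \<ge> T0" using that by (auto simp: T_def)
        have "X t > 0" using Dpos assms(2) t0 by (simp add: X_def)
        have "\<bar>p t u - p t v\<bar> * X t / ll \<le> (\<epsilon> * ll) * X t / ll"
          using T0[OF t0(2)] \<open>X t > 0\<close> lpos by (intro divide_right_mono mult_right_mono) auto
        then show ?thesis using Qeq[OF t0(1)] lpos by simp
      qed
      define B where "B = 1 + X 0"
      have Xup: "X t \<le> B * exp T * exp ((-1 + \<epsilon>) * t)" if t: "t \<ge> 0" for t
      proof (cases "t \<ge> T")
        case True
        have h: "X t * exp ((1 - \<epsilon>) * t) \<le> X T * exp ((1 - \<epsilon>) * T)"
          by (rule ode_upper2[OF derX T Qe True])
        have "X t = X t * exp ((1 - \<epsilon>) * t) * exp ((-1 + \<epsilon>) * t)"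
          by (simp add: mult.assoc exp_add[symmetric] algebra_simps)
        also have "\<dots> \<le> X T * exp ((1 - \<epsilon>) * T) * exp ((-1 + \<epsilon>) * t)"
          using h by simp
        also have "\<dots> \<le> B * exp T * exp ((-1 + \<epsilon>) * t)"
        proof -
          have "X T \<le> B" using Xb[OF T] by (simp add: B_def)
          moreover have "exp ((1 - \<epsilon>) * T) \<le> exp T" using ep T by (simp add: algebra_simps)
          moreover have "X T \<ge> 0" using Dpos assms(2) T by (simp add: X_def less_imp_le)
          ultimately have "X T * exp ((1 - \<epsilon>) * T) \<le> B * exp T"
            by (intro mult_mono) auto
          then show ?thesis by simp
        qed
        finally show ?thesis .
      next
        case False
        have "1 \<le> exp T * exp ((-1 + \<epsilon>) * t)"
          proof -
          have "\<epsilon> * t \<ge> 0" using ep t by simp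
          then have "0 \<le> T + (-1 + \<epsilon>) * t" using False by (simp add: algebra_simps)
          then show ?thesis by (simp add: exp_add[symmetric])
        qed
        moreover have "B \<ge> 0" using X0 by (simp add: B_def)
        ultimately have "B \<le> B * (exp T * exp ((-1 + \<epsilon>) * t))"
          by (simp add: mult_le_cancel_left1)
        then show ?thesis using Xb[OF t] by (simp add: B_def mult.assoc)
      qed
      show "\<exists>A>0. \<forall>t\<ge>0. X t \<le> A * exp ((-1 + \<epsilon>) * t)"
        using Xup X0 by (intro exI[of _ "B * exp T"]) (auto simp: B_def)
      show "\<exists>A>0. \<forall>t\<ge>0. \<bar>current L D p t u v\<bar> \<le> A * exp ((-1 + \<epsilon>) * t)"
      proof (intro exI[of _ "(1 + \<epsilon> * B) * exp T"] conjI allI impI)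
        show "(1 + \<epsilon> * B) * exp T > 0" using ep X0 by (simp add: B_def add_pos_nonneg)
        fix t :: real assume t: "t \<ge> 0"
        have Bn: "B \<ge> 0" using X0 by (simp add: B_def)
        show "\<bar>current L D p t u v\<bar> \<le> (1 + \<epsilon> * B) * exp T * exp ((-1 + \<epsilon>) * t)"
        proof (cases "t \<ge> T")
          case True
          have "\<bar>current L D p t u v\<bar> \<le> \<epsilon> * X t" by (rule Qe[OF True])
          also have "\<dots> \<le> \<epsilon> * (B * exp T * exp ((-1 + \<epsilon>) * t))"
            using Xup[OF t] ep by simp
          also have "\<dots> \<le> (1 + \<epsilon> * B) * exp T * exp ((-1 + \<epsilon>) * t)"
            by (simp add: algebra_simps)
          finally show ?thesis .
        next
          case False
          have e1: "1 \<le> exp T * exp ((-1 + \<epsilon>) * t)"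
            proof -
          have "\<epsilon> * t \<ge> 0" using ep t by simp
          then have "0 \<le> T + (-1 + \<epsilon>) * t" using False by (simp add: algebra_simps)
          then show ?thesis by (simp add: exp_add[symmetric])
        qed
          have "\<bar>current L D p t u v\<bar> \<le> 1" by (rule Q1[OF t])
          also have "\<dots> \<le> exp T * exp ((-1 + \<epsilon>) * t)" by (rule e1)
          also have "\<dots> \<le> (1 + \<epsilon> * B) * (exp T * exp ((-1 + \<epsilon>) * t))"
          proof -
            have "1 \<le> 1 + \<epsilon> * B" using Bn ep by simp
            moreover have "0 \<le> exp T * exp ((- 1 + \<epsilon>) * t)" by simp
            ultimately show ?thesis using mult_right_mono by fastforce
          qed
          finally show ?thesis by (simp add: mult.assoc)
        qed
      qed
    qed
    then show ?thesis unfolding decays_at_least_def by auto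
  qed
  show ?thesis using lower upper unfolding decays_with_rate_def X_def by simp
qed

end
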